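(* Let $L = L_p + \varepsilon L_d \in \mathbb{DH}[t]$ with $L_p, L_d$ vectorial and satisfying the Plücker condition $L_p\overline{L_d} + L_d\overline{L_p} = 0$, let $h \in \mathbb{R}[t]$, and let $P, D \in \mathbb{H}[t]$ with $P \neq 0$ satisfy $$P\mathbf{k}\overline{P} = hL_p, \qquad -P\mathbf{k}\overline{D} - D\mathbf{k}\overline{P} = hL_d .$$ Then $P\overline{D} + D\overline{P} = 0$.
   Context: $\mathbb{H}$ denotes the real quaternions with units $\mathbf{i},\mathbf{j},\mathbf{k}$ and conjugation $\overline{p_0 + p_1\mathbf{i} + p_2\mathbf{j} + p_3\mathbf{k}} = p_0 - p_1\mathbf{i} - p_2\mathbf{j} - p_3\mathbf{k}$; $\mathbb{DH} = \mathbb{H} + \varepsilon\mathbb{H}$ with $\varepsilon^2=0$, $\varepsilon$ central. $\mathbb{H}[t]$, $\mathbb{DH}[t]$ are polynomial rings in a real indeterminate $t$ commuting with the coefficients; conjugation acts coefficientwise. A quaternion polynomial is vectorial if its scalar part is zero. *)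

theory Defs
  imports "HOL-Computational_Algebra.Polynomial"
begin

text \<open>Quaternion polynomials H[t], represented as H \<otimes> R[t]: a quaternion polynomial
  p0 + p1 i + p2 j + p3 k with real polynomial components p0,...,p3 in R[t].
  Since t is real and commutes with the coefficients, this is exactly H[t].\<close>

datatype qpoly = QP (q0: "real poly") (q1: "real poly") (q2: "real poly") (q3: "real poly")

definition qp_zero :: qpoly where "qp_zero = QP 0 0 0 0"

definition qp_add :: "qpoly \<Rightarrow> qpoly \<Rightarrow> qpoly" where
  "qp_add p q = QP (q0 p + q0 q) (q1 p + q1 q) (q2 p + q2 q) (q3 p + q3 q)"

definition qp_neg :: "qpoly \<Rightarrow> qpoly" where
  "qp_neg p = QP (- q0 p) (- q1 p) (- q2 p) (- q3 p)"

text \<open>Hamilton product (i^2 = j^2 = k^2 = ijk = -1), coefficients in R[t].\<close>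
definition qp_mult :: "qpoly \<Rightarrow> qpoly \<Rightarrow> qpoly" where
  "qp_mult p q = QP
     (q0 p * q0 q - q1 p * q1 q - q2 p * q2 q - q3 p * q3 q)
     (q0 p * q1 q + q1 p * q0 q + q2 p * q3 q - q3 p * q2 q)
     (q0 p * q2 q - q1 p * q3 q + q2 p * q0 q + q3 p * q1 q)
     (q0 p * q3 q + q1 p * q2 q - q2 p * q1 q + q3 p * q0 q)"

definition qp_cnj :: "qpoly \<Rightarrow> qpoly" where
  "qp_cnj p = QP (q0 p) (- q1 p) (- q2 p) (- q3 p)"

definition qp_of_real_poly :: "real poly \<Rightarrow> qpoly" where
  "qp_of_real_poly h = QP h 0 0 0"

definition qp_k :: qpoly where "qp_k = QP 0 0 0 1"

definition qp_vectorial :: "qpoly \<Rightarrow> bool" where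
  "qp_vectorial p \<longleftrightarrow> q0 p = 0"

end

theory Submission
  imports Defs
begin

lemma sos_zero:
  fixes a b c d :: "real poly"
  assumes "a*a + b*b + c*c + d*d = 0" shows "a = 0"
proof -
  have "\<forall>x. poly a x = 0"
  proof
    fix x
    have "poly a x * poly a x + poly b x * poly b x + poly c x * poly c x + poly d x * poly d x = 0"
      using arg_cong[OF assms, of "\<lambda>p. poly p x"] by simp
    then show "poly a x = 0"
      using zero_le_square[of "poly a x"] zero_le_square[of "poly b x"] zero_le_square[of "poly c x"] zero_le_square[of "poly d x"]
      by (smt (verit) mult_eq_0_iff)
  qed
  then show ?thesis using poly_all_0_iff_0 by blast
qed

theorem lemma2:
  fixes Lp Ld P D :: qpoly and h :: "real poly"
  assumes "qp_vectorial Lp" and "qp_vectorial Ld"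
    and "qp_add (qp_mult Lp (qp_cnj Ld)) (qp_mult Ld (qp_cnj Lp)) = qp_zero"
    and "P \<noteq> qp_zero"
    and "qp_mult (qp_mult P qp_k) (qp_cnj P) = qp_mult (qp_of_real_poly h) Lp"
    and "qp_add (qp_neg (qp_mult (qp_mult P qp_k) (qp_cnj D)))
                (qp_neg (qp_mult (qp_mult D qp_k) (qp_cnj P)))
         = qp_mult (qp_of_real_poly h) Ld"
  shows "qp_add (qp_mult P (qp_cnj D)) (qp_mult D (qp_cnj P)) = qp_zero"
proof -
  obtain p0 p1 p2 p3 where P: "P = QP p0 p1 p2 p3" by (cases P)
  obtain d0 d1 d2 d3 where D: "D = QP d0 d1 d2 d3" by (cases D)
  obtain a1 a2 a3 where A: "Lp = QP 0 a1 a2 a3" using assms(1) by (cases Lp) (auto simp: qp_vectorial_def)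
  obtain b1 b2 b3 where B: "Ld = QP 0 b1 b2 b3" using assms(2) by (cases Ld) (auto simp: qp_vectorial_def)
  note defs = qp_add_def qp_mult_def qp_cnj_def qp_zero_def qp_k_def qp_of_real_poly_def qp_neg_def
  have pl: "a1*b1 + a2*b2 + a3*b3 = 0" using assms(3) unfolding A B defs by (simp add: algebra_simps)
  have e5: "h*a1 = q1 (qp_mult (qp_mult P qp_k) (qp_cnj P))"
           "h*a2 = q2 (qp_mult (qp_mult P qp_k) (qp_cnj P))"
           "h*a3 = q3 (qp_mult (qp_mult P qp_k) (qp_cnj P))"
    using assms(5) unfolding A defs by simp_all
  have e6: "h*b1 = q1 (qp_add (qp_neg (qp_mult (qp_mult P qp_k) (qp_cnj D)))
                (qp_neg (qp_mult (qp_mult D qp_k) (qp_cnj P))))"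
           "h*b2 = q2 (qp_add (qp_neg (qp_mult (qp_mult P qp_k) (qp_cnj D)))
                (qp_neg (qp_mult (qp_mult D qp_k) (qp_cnj P))))"
           "h*b3 = q3 (qp_add (qp_neg (qp_mult (qp_mult P qp_k) (qp_cnj D)))
                (qp_neg (qp_mult (qp_mult D qp_k) (qp_cnj P))))"
    using assms(6) unfolding B defs by simp_all
  have "(h*a1)*(h*b1) + (h*a2)*(h*b2) + (h*a3)*(h*b3) = h*h*(a1*b1 + a2*b2 + a3*b3)"
    by (simp add: algebra_simps)
  also have "\<dots> = 0" using pl by simp
  finally have z: "(h*a1)*(h*b1) + (h*a2)*(h*b2) + (h*a3)*(h*b3) = 0" .
  have "(h*a1)*(h*b1) + (h*a2)*(h*b2) + (h*a3)*(h*b3) =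
     -2 * (p0*p0+p1*p1+p2*p2+p3*p3) * (p0*d0+p1*d1+p2*d2+p3*d3)"
    unfolding e5 e6 unfolding P D defs by simp algebra
  with z have m': "-2 * (p0*p0+p1*p1+p2*p2+p3*p3) * (p0*d0+p1*d1+p2*d2+p3*d3) = 0" by metis
  have m: "(p0*p0+p1*p1+p2*p2+p3*p3) * (p0*d0+p1*d1+p2*d2+p3*d3) = 0"
    using m' by (simp only: mult.assoc mult_eq_0_iff) simp
  have "p0*p0+p1*p1+p2*p2+p3*p3 \<noteq> 0"
  proof
    assume h0: "p0*p0+p1*p1+p2*p2+p3*p3 = 0"
    have "p0 = 0" using sos_zero[OF h0] .
    moreover have "p1 = 0" using sos_zero[of p1 p0 p2 p3] h0 by (simp add: algebra_simps)
    moreover have "p2 = 0" using sos_zero[of p2 p0 p1 p3] h0 by (simp add: algebra_simps)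
    moreover have "p3 = 0" using sos_zero[of p3 p0 p1 p2] h0 by (simp add: algebra_simps)
    ultimately show False using assms(4) P by (simp add: qp_zero_def)
  qed
  with m have s: "p0*d0+p1*d1+p2*d2+p3*d3 = 0" by simp
  show ?thesis unfolding P D defs using s
    by simp (simp add: algebra_simps; metis distrib_left mult_2 mult_zero_right add.assoc)
qed
end
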